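(* Let $\mu$ be a distribution on $\Sigma\times\Gamma$ (finite sets) and $t:\mathsf{supp}(\mu)\to\mathbb{Z}_m$, defining a two-player $\mathsf{XOR}$ game $\mathcal{G}$ that is connected and has value less than $1$. Let $T(x,y)=\omega^{-t(x,y)}$ with $\omega=e^{2\pi i/m}$. Then there is a constant $c=c(\mathcal{G},\mu)>0$ such that for all $n$ and all $F:\Sigma^n\to\mathbb{D}$, $G:\Gamma^n\to\mathbb{D}$, $$\left|\mathbb{E}_{(x,y)\sim\mu^{\otimes n}}\Big[F(x)G(y)\prod_{i=1}^nT(x_i,y_i)\Big]\right|\le 2^{-cn}.$$
   Context: $\mathbb{D}$ is the closed unit disk in $\mathbb{C}$. The game is connected if the bipartite graph on vertex set $\Sigma\sqcup\Gamma$ with edge set $\mathsf{supp}(\mu)$ is connected. The value of the game is $\max_{f:\Sigma\to\mathbb{Z}_m,\,g:\Gamma\to\mathbb{Z}_m}\Pr_{(x,y)\sim\mu}[f(x)+g(y)=t(x,y)]$. *)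

theory Defs
  imports "HOL-Analysis.Analysis"
begin

definition is_distribution :: "('a::finite \<times> 'b::finite \<Rightarrow> real) \<Rightarrow> bool" where
  "is_distribution \<mu> \<longleftrightarrow> (\<forall>p. \<mu> p \<ge> 0) \<and> (\<Sum>p\<in>UNIV. \<mu> p) = 1"

definition supp :: "('a \<times> 'b \<Rightarrow> real) \<Rightarrow> ('a \<times> 'b) set" where
  "supp \<mu> = {p. \<mu> p \<noteq> 0}"

definition game_edge :: "('a \<times> 'b \<Rightarrow> real) \<Rightarrow> ('a + 'b) \<Rightarrow> ('a + 'b) \<Rightarrow> bool" where
  "game_edge \<mu> u v \<longleftrightarrow>
     (\<exists>x y. (x, y) \<in> supp \<mu> \<and> ((u = Inl x \<and> v = Inr y) \<or> (u = Inr y \<and> v = Inl x)))"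

definition game_connected :: "('a \<times> 'b \<Rightarrow> real) \<Rightarrow> bool" where
  "game_connected \<mu> \<longleftrightarrow> (\<forall>u v. (game_edge \<mu>)\<^sup>*\<^sup>* u v)"

(* Elements of Z_m are represented by integers, equality in Z_m is congruence mod m;
   t is only relevant on supp \<mu>. *)
definition win_prob :: "('a::finite \<times> 'b::finite \<Rightarrow> real) \<Rightarrow> nat \<Rightarrow> ('a \<Rightarrow> 'b \<Rightarrow> int)
    \<Rightarrow> ('a \<Rightarrow> int) \<Rightarrow> ('b \<Rightarrow> int) \<Rightarrow> real" where
  "win_prob \<mu> m t f g = (\<Sum>(x, y)\<in>UNIV. if (f x + g y) mod int m = t x y mod int m then \<mu> (x, y) else 0)"

definition xor_value :: "('a::finite \<times> 'b::finite \<Rightarrow> real) \<Rightarrow> nat \<Rightarrow> ('a \<Rightarrow> 'b \<Rightarrow> int) \<Rightarrow> real" where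
  "xor_value \<mu> m t = Max {win_prob \<mu> m t f g | f g.
      (\<forall>x. f x \<in> {0..<int m}) \<and> (\<forall>y. g y \<in> {0..<int m})}"

definition omega :: "nat \<Rightarrow> complex" where
  "omega m = exp (2 * pi * \<i> / of_nat m)"

definition Tfun :: "nat \<Rightarrow> ('a \<Rightarrow> 'b \<Rightarrow> int) \<Rightarrow> 'a \<Rightarrow> 'b \<Rightarrow> complex" where
  "Tfun m t x y = omega m powi (- t x y)"

(* E_{(x,y) ~ \<mu>^{\<otimes>n}} [F(x) G(y) \<Prod>_i T(x_i,y_i)], n-tuples as functions on {..<n} *)
definition corr :: "('a::finite \<times> 'b::finite \<Rightarrow> real) \<Rightarrow> nat \<Rightarrow> ('a \<Rightarrow> 'b \<Rightarrow> int) \<Rightarrow> nat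
    \<Rightarrow> ((nat \<Rightarrow> 'a) \<Rightarrow> complex) \<Rightarrow> ((nat \<Rightarrow> 'b) \<Rightarrow> complex) \<Rightarrow> complex" where
  "corr \<mu> m t n F G =
     (\<Sum>x\<in>PiE {..<n} (\<lambda>_. UNIV). \<Sum>y\<in>PiE {..<n} (\<lambda>_. UNIV).
        of_real (\<Prod>i<n. \<mu> (x i, y i)) * F x * G y * (\<Prod>i<n. Tfun m t (x i) (y i)))"

end

theory Submission
  imports Defs
begin


lemma sum_PiE_Suc:
  "(\<Sum>x\<in>PiE {..<Suc n} (\<lambda>_. UNIV::'a::finite set). h x) =
   (\<Sum>x\<in>PiE {..<n} (\<lambda>_. UNIV::'a set). \<Sum>a\<in>UNIV. h (x(n:=a)))"
proof -
  have e: "PiE {..<Suc n} (\<lambda>_. UNIV::'a set) = (\<lambda>(y, g). g(n := y)) ` (UNIV \<times> PiE {..<n} (\<lambda>_. UNIV))"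
    by (simp add: lessThan_Suc PiE_insert_eq)
  have i: "inj_on (\<lambda>(y, g). g(n := y)) (UNIV \<times> PiE {..<n} (\<lambda>_. UNIV::'a set))"
    by (rule inj_combinator) auto
  show ?thesis
  proof -
    have "(\<Sum>x\<in>PiE {..<Suc n} (\<lambda>_. UNIV::'a set). h x) = (\<Sum>(a,x)\<in>UNIV \<times> PiE {..<n} (\<lambda>_. UNIV::'a set). h (x(n:=a)))"
      unfolding e sum.reindex[OF i] by (simp add: case_prod_unfold)
    also have "\<dots> = (\<Sum>a\<in>UNIV. \<Sum>x\<in>PiE {..<n} (\<lambda>_. UNIV::'a set). h (x(n:=a)))"
      by (rule sum.cartesian_product[symmetric])
    also have "\<dots> = (\<Sum>x\<in>PiE {..<n} (\<lambda>_. UNIV::'a set). \<Sum>a\<in>UNIV. h (x(n:=a)))"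
      by (rule sum.swap)
    finally show ?thesis .
  qed
qed

lemma prod_upd: "(\<Prod>i<Suc n. g ((x(n:=a)) i)) = (\<Prod>i<n. g (x i)) * g a"
  by (simp add: prod.lessThan_Suc)

lemma omega_powi: "omega m powi j = exp (2 * pi * \<i> * of_int j / of_nat m)"
proof (cases "j \<ge> 0")
  case True
  then obtain k where "j = int k" by (metis nonneg_eq_int)
  then show ?thesis unfolding omega_def
    by (simp add: exp_of_nat_mult[symmetric] mult_ac)
next
  case False
  then obtain k where "j = - int k" by (metis le_cases neg_0_le_iff_le nonneg_eq_int minus_minus)
  then show ?thesis unfolding omega_def
    by (simp add: exp_of_nat_mult[symmetric] mult_ac power_int_minus exp_minus[symmetric])
qed

lemma norm_Tfun: "norm (Tfun m t x y) = 1"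
  unfolding Tfun_def omega_powi by (simp add: norm_exp_eq_Re)

lemma omega_eq_1: "m \<ge> 1 \<Longrightarrow> exp (2 * pi * \<i> * of_int j / of_nat m) = 1 \<Longrightarrow> int m dvd j"
proof -
  assume m: "m \<ge> 1" and e: "exp (2 * pi * \<i> * of_int j / of_nat m) = 1"
  then obtain n :: int where "Im (2 * pi * \<i> * of_int j / of_nat m) = of_int (2*n) * pi"
    using exp_eq_1 by blast
  then have "2 * pi * j / m = 2 * n * pi" by simp
  then have "real_of_int j = real_of_int (n * m)" using m by (simp add: field_simps)
  then have "j = n * m" by (simp only: of_int_eq_iff)
  then show ?thesis by simp
qed



lemma var_id_real:
  fixes w x :: "'a \<Rightarrow> real"
  shows "(\<Sum>a\<in>A. w a) * (\<Sum>a\<in>A. w a * (x a)\<^sup>2) - (\<Sum>a\<in>A. w a * x a)\<^sup>2 =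
    (1/2) * (\<Sum>a\<in>A. \<Sum>b\<in>A. w a * w b * (x a - x b)\<^sup>2)"
proof -
  have "(\<Sum>a\<in>A. \<Sum>b\<in>A. w a * w b * (x a - x b)\<^sup>2) =
        (\<Sum>a\<in>A. \<Sum>b\<in>A. (w a * (x a)\<^sup>2) * w b) + (\<Sum>a\<in>A. \<Sum>b\<in>A. w a * (w b * (x b)\<^sup>2)) - 2 * (\<Sum>a\<in>A. \<Sum>b\<in>A. (w a * x a) * (w b * x b))"
    by (simp add: sum.distrib sum_subtractf sum_distrib_left power2_diff algebra_simps)
  also have "\<dots> = (\<Sum>a\<in>A. w a * (x a)\<^sup>2) * (\<Sum>a\<in>A. w a) + (\<Sum>a\<in>A. w a) * (\<Sum>a\<in>A. w a * (x a)\<^sup>2)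
       - 2 * ((\<Sum>a\<in>A. w a * x a) * (\<Sum>a\<in>A. w a * x a))"
    by (simp only: sum_product)
  finally show ?thesis by (simp add: power2_eq_square algebra_simps)
qed

lemma var_id_complex:
  fixes w :: "'a \<Rightarrow> real" and z :: "'a \<Rightarrow> complex"
  shows "(\<Sum>a\<in>A. w a) * (\<Sum>a\<in>A. w a * (cmod (z a))\<^sup>2) - (cmod (\<Sum>a\<in>A. of_real (w a) * z a))\<^sup>2 =
    (1/2) * (\<Sum>a\<in>A. \<Sum>b\<in>A. w a * w b * (cmod (z a - z b))\<^sup>2)"
proof -
  have r: "(\<Sum>a\<in>A. w a) * (\<Sum>a\<in>A. w a * (Re (z a))\<^sup>2) - (\<Sum>a\<in>A. w a * Re (z a))\<^sup>2 =
    (1/2) * (\<Sum>a\<in>A. \<Sum>b\<in>A. w a * w b * (Re (z a) - Re (z b))\<^sup>2)" by (rule var_id_real)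
  have i: "(\<Sum>a\<in>A. w a) * (\<Sum>a\<in>A. w a * (Im (z a))\<^sup>2) - (\<Sum>a\<in>A. w a * Im (z a))\<^sup>2 =
    (1/2) * (\<Sum>a\<in>A. \<Sum>b\<in>A. w a * w b * (Im (z a) - Im (z b))\<^sup>2)" by (rule var_id_real)
  have "(cmod (\<Sum>a\<in>A. of_real (w a) * z a))\<^sup>2 = (\<Sum>a\<in>A. w a * Re (z a))\<^sup>2 + (\<Sum>a\<in>A. w a * Im (z a))\<^sup>2"
    by (simp add: cmod_power2 Re_sum Im_sum)
  moreover have "(\<Sum>a\<in>A. w a * (cmod (z a))\<^sup>2) = (\<Sum>a\<in>A. w a * (Re (z a))\<^sup>2) + (\<Sum>a\<in>A. w a * (Im (z a))\<^sup>2)"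
    by (simp add: cmod_power2 sum.distrib algebra_simps)
  moreover have "(\<Sum>a\<in>A. \<Sum>b\<in>A. w a * w b * (cmod (z a - z b))\<^sup>2) =
     (\<Sum>a\<in>A. \<Sum>b\<in>A. w a * w b * (Re (z a) - Re (z b))\<^sup>2) + (\<Sum>a\<in>A. \<Sum>b\<in>A. w a * w b * (Im (z a) - Im (z b))\<^sup>2)"
    by (simp add: cmod_power2 sum.distrib algebra_simps)
  ultimately show ?thesis using r i by (simp add: algebra_simps)
qed



lemma xor_value_ge:
  fixes \<mu> :: "'a::finite \<times> 'b::finite \<Rightarrow> real"
  assumes "m \<ge> 1" and "\<And>x y. int m dvd (F x + G y - t x y) \<or> \<mu> (x, y) = 0"
  shows "xor_value \<mu> m t \<ge> (\<Sum>p\<in>UNIV. \<mu> p)"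
proof -
  define F' where "F' = (\<lambda>x. F x mod int m)"
  define G' where "G' = (\<lambda>y. G y mod int m)"
  let ?S = "{f :: 'a \<Rightarrow> int. \<forall>x. f x \<in> {0..<int m}}"
  let ?T = "{g :: 'b \<Rightarrow> int. \<forall>x. g x \<in> {0..<int m}}"
  have fS: "finite ?S"
  proof -
    have "?S = PiE UNIV (\<lambda>_. {0..<int m})" by (auto simp: PiE_UNIV_domain)
    then show ?thesis by (simp add: finite_PiE)
  qed
  have fT: "finite ?T"
  proof -
    have "?T = PiE UNIV (\<lambda>_. {0..<int m})" by (auto simp: PiE_UNIV_domain)
    then show ?thesis by (simp add: finite_PiE)
  qed
  have eq: "{win_prob \<mu> m t f g | f g. (\<forall>x. f x \<in> {0..<int m}) \<and> (\<forall>y. g y \<in> {0..<int m})}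
      = (\<lambda>(f,g). win_prob \<mu> m t f g) ` (?S \<times> ?T)" by auto
  have fin: "finite {win_prob \<mu> m t f g | f g. (\<forall>x. f x \<in> {0..<int m}) \<and> (\<forall>y. g y \<in> {0..<int m})}"
    unfolding eq using fS fT by simp
  have mem: "win_prob \<mu> m t F' G' \<in> {win_prob \<mu> m t f g | f g. (\<forall>x. f x \<in> {0..<int m}) \<and> (\<forall>y. g y \<in> {0..<int m})}"
  proof -
    have "int m > 0" using assms(1) by simp
    then have "(\<forall>x. F' x \<in> {0..<int m}) \<and> (\<forall>y. G' y \<in> {0..<int m})"
      by (simp add: F'_def G'_def)
    then show ?thesis by blast
  qed
  have "win_prob \<mu> m t F' G' = (\<Sum>p\<in>UNIV. \<mu> p)"
    unfolding win_prob_def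
  proof (rule sum.cong[OF refl], clarify)
    fix x y
    show "(if (F' x + G' y) mod int m = t x y mod int m then \<mu> (x, y) else 0) = \<mu> (x, y)"
    proof (cases "\<mu> (x, y) = 0")
      case False
      then have "int m dvd (F x + G y - t x y)" using assms(2) by blast
      then have "(F x + G y) mod int m = t x y mod int m" by (simp add: mod_eq_dvd_iff)
      then have "(F' x + G' y) mod int m = t x y mod int m"
        by (simp add: F'_def G'_def mod_add_eq)
      then show ?thesis by simp
    qed simp
  qed
  then show ?thesis unfolding xor_value_def using Max_ge[OF fin mem] by simp
qed



lemma conn_nbY:
  assumes "game_connected \<mu>" shows "\<exists>a. \<mu> (a, b) \<noteq> 0"
proof -
  have "(game_edge \<mu>)\<^sup>*\<^sup>* (Inl undefined) (Inr b)" using assms unfolding game_connected_def by blast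
  then obtain u where "game_edge \<mu> u (Inr b)"
    by (cases rule: rtranclp.cases) auto
  then show ?thesis unfolding game_edge_def supp_def by auto
qed

lemma conn_nbX:
  assumes "game_connected \<mu>" shows "\<exists>b. \<mu> (a, b) \<noteq> 0"
proof -
  have "(game_edge \<mu>)\<^sup>*\<^sup>* (Inr undefined) (Inl a)" using assms unfolding game_connected_def by blast
  then obtain u where "game_edge \<mu> u (Inl a)"
    by (cases rule: rtranclp.cases) auto
  then show ?thesis unfolding game_edge_def supp_def by auto
qed

lemma consistent_imp_sol:
  fixes \<mu> :: "'a \<times> 'b \<Rightarrow> real" and f :: "'a \<Rightarrow> complex"
  assumes m: "m \<ge> 1" and conn: "game_connected \<mu>"
    and cons: "\<And>a a' b. \<mu> (a, b) \<noteq> 0 \<Longrightarrow> \<mu> (a', b) \<noteq> 0 \<Longrightarrow> Tfun m t a b * f a = Tfun m t a' b * f a'"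
    and f0: "f a0 \<noteq> 0"
  shows "\<exists>F G. \<forall>x y. int m dvd (F x + G y - t x y) \<or> \<mu> (x, y) = 0"
proof -
  define E where "E = (\<lambda>k::int. exp (2 * pi * \<i> * of_int k / of_nat m))"
  have Eadd: "E (j + k) = E j * E k" for j k
    unfolding E_def by (simp add: exp_add[symmetric] algebra_simps add_divide_distrib)
  have E0: "E 0 = 1" by (simp add: E_def)
  have Einv: "E k * E (- k) = 1" for k using Eadd[of k "- k"] E0 by simp
  have Esub: "E (j - k) = E j * E (- k)" for j k using Eadd[of j "- k"] by simp
  have T: "Tfun m t a b = E (- t a b)" for a b unfolding Tfun_def omega_powi E_def by simp
  define nb where "nb = (\<lambda>b. SOME a. \<mu> (a, b) \<noteq> 0)"
  have nb: "\<mu> (nb b, b) \<noteq> 0" for b unfolding nb_def using someI_ex[OF conn_nbY[OF conn]] by blast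
  define p where "p = (\<lambda>b. Tfun m t (nb b) b * f (nb b))"
  have pe: "\<mu> (a, b) \<noteq> 0 \<Longrightarrow> p b = E (- t a b) * f a" for a b
    unfolding p_def using cons[OF nb, of a b] by (simp add: T)
  define R where "R = (\<lambda>v. case v of Inl a \<Rightarrow> (\<exists>k. f a = f a0 * E k) | Inr b \<Rightarrow> (\<exists>k. p b = f a0 * E k))"
  have R: "R v" for v
  proof -
    have "(game_edge \<mu>)\<^sup>*\<^sup>* (Inl a0) v" using conn unfolding game_connected_def by blast
    then show ?thesis
    proof (induction rule: rtranclp_induct)
      case base
      then show ?case unfolding R_def using E0 by (auto intro: exI[of _ 0])
    next
      case (step u v)
      from step.hyps(2) obtain x y where xy: "\<mu> (x, y) \<noteq> 0"
        and uv: "(u = Inl x \<and> v = Inr y) \<or> (u = Inr y \<and> v = Inl x)"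
        unfolding game_edge_def supp_def by auto
      from uv show ?case
      proof
        assume h: "u = Inl x \<and> v = Inr y"
        with step.IH obtain k where k: "f x = f a0 * E k" unfolding R_def by auto
        have "p y = f a0 * E (k + - t x y)" using pe[OF xy] k by (simp add: Eadd Esub mult_ac)
        then show ?case using h unfolding R_def by auto
      next
        assume h: "u = Inr y \<and> v = Inl x"
        with step.IH obtain k where k: "p y = f a0 * E k" unfolding R_def by auto
        have "E (t x y) * p y = f x" using pe[OF xy] Einv[of "t x y"] by (simp add: mult_ac)
        then have "f x = f a0 * E (k + t x y)" using k E0 by (simp add: Eadd Esub mult_ac)
        then show ?case using h unfolding R_def by auto
      qed
    qed
  qed
  define ka where "ka = (\<lambda>a. SOME k. f a = f a0 * E k)"
  define lb where "lb = (\<lambda>b. SOME k. p b = f a0 * E k)"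
  have ka: "f a = f a0 * E (ka a)" for a
    using R[of "Inl a"] unfolding R_def ka_def by (auto intro: someI_ex)
  have lb: "p b = f a0 * E (lb b)" for b
    using R[of "Inr b"] unfolding R_def lb_def by (auto intro: someI_ex)
  have "int m dvd (ka x + (- lb y) - t x y) \<or> \<mu> (x, y) = 0" for x y
  proof (cases "\<mu> (x, y) = 0")
    case False
    have "f a0 * E (lb y) = f a0 * E (ka x + - t x y)"
      using pe[OF False] ka[of x] lb[of y] by (simp add: Eadd Esub mult_ac)
    then have "E (lb y) = E (ka x + - t x y)" using f0 by simp
    have "E (ka x + - lb y - t x y) * E (lb y) = E (ka x + - lb y - t x y + lb y)"
      by (simp only: Eadd)
    also have "\<dots> = E (ka x + - t x y)" by (simp add: algebra_simps)
    also have "\<dots> = 1 * E (lb y)" using \<open>E (lb y) = E (ka x + - t x y)\<close> by simp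
    finally have "E (ka x + - lb y - t x y) * E (lb y) = 1 * E (lb y)" .
    moreover have "E (lb y) \<noteq> 0" by (simp add: E_def)
    ultimately have "E (ka x + - lb y - t x y) = 1" by simp
    then show ?thesis using omega_eq_1[OF m] unfolding E_def by blast
  qed simp
  then have "\<forall>x y. int m dvd (ka x + (\<lambda>y. - lb y) y - t x y) \<or> \<mu> (x, y) = 0" by simp
  then show ?thesis by (intro exI[of _ ka] exI[of _ "\<lambda>y. - lb y"]) simp
qed



definition mX :: "('a::finite \<times> 'b::finite \<Rightarrow> real) \<Rightarrow> 'a \<Rightarrow> real" where
  "mX \<mu> a = (\<Sum>b\<in>UNIV. \<mu> (a, b))"
definition mY :: "('a::finite \<times> 'b::finite \<Rightarrow> real) \<Rightarrow> 'b \<Rightarrow> real" where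
  "mY \<mu> b = (\<Sum>a\<in>UNIV. \<mu> (a, b))"
definition Qf :: "('a::finite \<times> 'b::finite \<Rightarrow> real) \<Rightarrow> nat \<Rightarrow> ('a \<Rightarrow> 'b \<Rightarrow> int) \<Rightarrow> ('a \<Rightarrow> complex) \<Rightarrow> real" where
  "Qf \<mu> m t f = (\<Sum>b\<in>UNIV. (cmod (\<Sum>a\<in>UNIV. of_real (\<mu> (a, b)) * Tfun m t a b * f a))\<^sup>2 / mY \<mu> b)"
definition N1 :: "('a::finite \<times> 'b::finite \<Rightarrow> real) \<Rightarrow> ('a \<Rightarrow> complex) \<Rightarrow> real" where
  "N1 \<mu> f = (\<Sum>a\<in>UNIV. mX \<mu> a * (cmod (f a))\<^sup>2)"

lemma gap_identity:
  assumes pos: "\<And>b. mY \<mu> b > 0"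
  shows "N1 \<mu> f - Qf \<mu> m t f = (\<Sum>b\<in>UNIV. ((1/2) * (\<Sum>a\<in>UNIV. \<Sum>a'\<in>UNIV. \<mu> (a, b) * \<mu> (a', b) *
      (cmod (Tfun m t a b * f a - Tfun m t a' b * f a'))\<^sup>2)) / mY \<mu> b)"
proof -
  have "N1 \<mu> f = (\<Sum>b\<in>UNIV. \<Sum>a\<in>UNIV. \<mu> (a, b) * (cmod (Tfun m t a b * f a))\<^sup>2)"
  proof -
    have "N1 \<mu> f = (\<Sum>a\<in>UNIV. \<Sum>b\<in>UNIV. \<mu> (a, b) * (cmod (Tfun m t a b * f a))\<^sup>2)"
      unfolding N1_def mX_def by (simp add: sum_distrib_right norm_mult norm_Tfun)
    also have "\<dots> = (\<Sum>b\<in>UNIV. \<Sum>a\<in>UNIV. \<mu> (a, b) * (cmod (Tfun m t a b * f a))\<^sup>2)"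
      by (rule sum.swap)
    finally show ?thesis .
  qed
  also have "\<dots> = (\<Sum>b\<in>UNIV. (mY \<mu> b * (\<Sum>a\<in>UNIV. \<mu> (a, b) * (cmod (Tfun m t a b * f a))\<^sup>2)) / mY \<mu> b)"
    using pos by (intro sum.cong refl) (simp add: less_imp_neq[symmetric])
  finally have n: "N1 \<mu> f = \<dots>" .
  have q: "Qf \<mu> m t f = (\<Sum>b\<in>UNIV. (cmod (\<Sum>a\<in>UNIV. of_real (\<mu> (a, b)) * (Tfun m t a b * f a)))\<^sup>2 / mY \<mu> b)"
    unfolding Qf_def by (simp add: mult.assoc)
  show ?thesis unfolding n q sum_subtractf[symmetric] diff_divide_distrib[symmetric]
  proof (rule sum.cong[OF refl])
    fix b
    show "(mY \<mu> b * (\<Sum>a\<in>UNIV. \<mu> (a, b) * (cmod (Tfun m t a b * f a))\<^sup>2) -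
          (cmod (\<Sum>a\<in>UNIV. complex_of_real (\<mu> (a, b)) * (Tfun m t a b * f a)))\<^sup>2) / mY \<mu> b =
         1 / 2 * (\<Sum>a\<in>UNIV. \<Sum>a'\<in>UNIV. \<mu> (a, b) * \<mu> (a', b) * (cmod (Tfun m t a b * f a - Tfun m t a' b * f a'))\<^sup>2) / mY \<mu> b"
      unfolding mY_def var_id_complex[of "\<lambda>a. \<mu> (a, b)" UNIV "\<lambda>a. Tfun m t a b * f a"] by simp
  qed
qed

lemma Q_le_N1:
  assumes nn: "\<And>p. \<mu> p \<ge> 0" and pos: "\<And>b. mY \<mu> b > 0"
  shows "Qf \<mu> m t f \<le> N1 \<mu> f"
proof -
  have "0 \<le> (\<Sum>b\<in>UNIV. ((1/2) * (\<Sum>a\<in>UNIV. \<Sum>a'\<in>UNIV. \<mu> (a, b) * \<mu> (a', b) *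
      (cmod (Tfun m t a b * f a - Tfun m t a' b * f a'))\<^sup>2)) / mY \<mu> b)"
    using nn pos by (intro sum_nonneg divide_nonneg_pos mult_nonneg_nonneg) (auto intro!: sum_nonneg)
  then show ?thesis using gap_identity[OF pos, of f m t] by simp
qed

lemma Q_eq_N1:
  assumes nn: "\<And>p. \<mu> p \<ge> 0" and pos: "\<And>b. mY \<mu> b > 0" and eq: "Qf \<mu> m t f = N1 \<mu> f"
    and ab: "\<mu> (a, b) \<noteq> 0" and ab': "\<mu> (a', b) \<noteq> 0"
  shows "Tfun m t a b * f a = Tfun m t a' b * f a'"
proof -
  define D where "D = (\<lambda>b. ((1/2) * (\<Sum>a\<in>UNIV. \<Sum>a'\<in>UNIV. \<mu> (a, b) * \<mu> (a', b) *
      (cmod (Tfun m t a b * f a - Tfun m t a' b * f a'))\<^sup>2)) / mY \<mu> b)"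
  have D0: "0 \<le> D b" for b unfolding D_def
    using nn pos by (intro divide_nonneg_pos mult_nonneg_nonneg) (auto intro!: sum_nonneg)
  have "sum D UNIV = 0" using gap_identity[OF pos, of f m t] eq unfolding D_def by simp
  then have "D b = 0" using D0 by (simp add: sum_nonneg_eq_0_iff)
  then have "(\<Sum>a\<in>UNIV. \<Sum>a'\<in>UNIV. \<mu> (a, b) * \<mu> (a', b) *
      (cmod (Tfun m t a b * f a - Tfun m t a' b * f a'))\<^sup>2) = 0"
    unfolding D_def using pos[of b] by simp
  then have "\<forall>a\<in>UNIV. (\<Sum>a'\<in>UNIV. \<mu> (a, b) * \<mu> (a', b) *
      (cmod (Tfun m t a b * f a - Tfun m t a' b * f a'))\<^sup>2) = 0"
    using nn by (subst (asm) sum_nonneg_eq_0_iff) (auto intro!: sum_nonneg)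
  then have "(\<Sum>a'\<in>UNIV. \<mu> (a, b) * \<mu> (a', b) *
      (cmod (Tfun m t a b * f a - Tfun m t a' b * f a'))\<^sup>2) = 0" by blast
  then have "\<forall>a'\<in>UNIV. \<mu> (a, b) * \<mu> (a', b) *
      (cmod (Tfun m t a b * f a - Tfun m t a' b * f a'))\<^sup>2 = 0"
    using nn by (subst (asm) sum_nonneg_eq_0_iff) auto
  then have "\<mu> (a, b) * \<mu> (a', b) * (cmod (Tfun m t a b * f a - Tfun m t a' b * f a'))\<^sup>2 = 0" by blast
  then show ?thesis using ab ab' by simp
qed



lemma cont_vec_nth[continuous_intros]:
  fixes f :: "'x::topological_space \<Rightarrow> complex ^ 'n"
  shows "continuous_on S f \<Longrightarrow> continuous_on S (\<lambda>x. f x $ i)"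
  using bounded_linear.continuous_on[OF bounded_linear_vec_nth] by blast

lemma Qf_scale:
  assumes "s > 0"
  shows "Qf \<mu> m t (\<lambda>a. f a / of_real s) = Qf \<mu> m t f / s\<^sup>2"
proof -
  have "(cmod (\<Sum>a\<in>UNIV. of_real (\<mu> (a, b)) * Tfun m t a b * (f a / of_real s)))\<^sup>2 / mY \<mu> b =
        (cmod (\<Sum>a\<in>UNIV. of_real (\<mu> (a, b)) * Tfun m t a b * f a))\<^sup>2 / mY \<mu> b / s\<^sup>2" for b
  proof -
    have "(\<Sum>a\<in>UNIV. of_real (\<mu> (a, b)) * Tfun m t a b * (f a / of_real s)) =
        (\<Sum>a\<in>UNIV. of_real (\<mu> (a, b)) * Tfun m t a b * f a) / of_real s"
      by (simp add: sum_divide_distrib)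
    then show ?thesis using assms by (simp add: norm_divide power_divide)
  qed
  then show ?thesis unfolding Qf_def by (simp add: sum_divide_distrib)
qed

lemma Qf_nonneg: "(\<And>b. mY \<mu> b > 0) \<Longrightarrow> Qf \<mu> m t f \<ge> 0"
  unfolding Qf_def by (intro sum_nonneg divide_nonneg_pos) auto

lemma cont_g:
  assumes "\<And>a. mX \<mu> a > 0" "\<And>b. mY \<mu> b > 0"
  shows "continuous_on UNIV (\<lambda>u::complex^'a::finite. Qf \<mu> m t (\<lambda>a. u$a / of_real (sqrt (mX \<mu> a))))"
  unfolding Qf_def using assms by (intro continuous_intros) (auto simp: less_imp_neq[symmetric])



lemma key:
  fixes \<mu> :: "'a::finite \<times> 'b::finite \<Rightarrow> real"
  assumes m: "m \<ge> 1" and dist: "is_distribution \<mu>" and conn: "game_connected \<mu>"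
    and val: "xor_value \<mu> m t < 1"
  shows "\<exists>\<rho>. 0 \<le> \<rho> \<and> \<rho> < 1 \<and> (\<forall>f. Qf \<mu> m t f \<le> \<rho>\<^sup>2 * N1 \<mu> f)"
proof -
  have nn: "\<And>p. \<mu> p \<ge> 0" and s1: "(\<Sum>p\<in>UNIV. \<mu> p) = 1" using dist unfolding is_distribution_def by auto
  have posX: "mX \<mu> a > 0" for a
  proof -
    obtain b where b: "\<mu> (a, b) \<noteq> 0" using conn_nbX[OF conn] by blast
    have "\<mu> (a, b) \<le> mX \<mu> a" unfolding mX_def using nn by (intro member_le_sum) auto
    then show ?thesis using b nn[of "(a,b)"] by linarith
  qed
  have posY: "mY \<mu> b > 0" for b
  proof -
    obtain a where a: "\<mu> (a, b) \<noteq> 0" using conn_nbY[OF conn] by blast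
    have "\<mu> (a, b) \<le> mY \<mu> b" unfolding mY_def using nn by (intro member_le_sum) auto
    then show ?thesis using a nn[of "(a,b)"] by linarith
  qed
  have strict: "Qf \<mu> m t f < N1 \<mu> f" if f0: "f a0 \<noteq> 0" for f a0
  proof (rule ccontr)
    assume "\<not> Qf \<mu> m t f < N1 \<mu> f"
    then have eq: "Qf \<mu> m t f = N1 \<mu> f" using Q_le_N1[OF nn posY, of m t f] by linarith
    obtain F G where FG: "\<forall>x y. int m dvd (F x + G y - t x y) \<or> \<mu> (x, y) = 0"
      using consistent_imp_sol[OF m conn Q_eq_N1[OF nn posY eq] f0] by blast
    have "xor_value \<mu> m t \<ge> 1" using xor_value_ge[OF m, of F G t \<mu>] FG s1 by simp
    then show False using val by simp
  qed
  define g where "g = (\<lambda>u::complex^'a. Qf \<mu> m t (\<lambda>a. u$a / of_real (sqrt (mX \<mu> a))))"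
  have "sphere (0::complex^'a) 1 \<noteq> {}"
    using vector_choose_size[of 1] by auto
  then obtain u0 where u0: "u0 \<in> sphere 0 1" and u0max: "\<And>u. u \<in> sphere 0 1 \<Longrightarrow> g u \<le> g u0"
    using continuous_attains_sup[OF compact_sphere _ continuous_on_subset[OF cont_g[OF posX posY] subset_UNIV]]
    unfolding g_def by blast
  have normsq: "(norm u)\<^sup>2 = (\<Sum>a\<in>UNIV. (cmod (u$a))\<^sup>2)" for u :: "complex^'a"
    unfolding norm_vec_def L2_set_def by (simp add: sum_nonneg)
  have N1u: "N1 \<mu> (\<lambda>a. u$a / of_real (sqrt (mX \<mu> a))) = (norm u)\<^sup>2" for u :: "complex^'a"
    unfolding normsq N1_def using posX
  proof (intro sum.cong refl)
    fix a
    have "mX \<mu> a > 0" by (rule posX)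
    then show "mX \<mu> a * (cmod (u $ a / complex_of_real (sqrt (mX \<mu> a))))\<^sup>2 = (cmod (u $ a))\<^sup>2"
      by (simp add: norm_divide power_divide)
  qed
  have "u0 \<noteq> 0" using u0 by auto
  then obtain a0 where "u0 $ a0 \<noteq> 0" by (metis vec_eq_iff zero_index)
  then have "u0 $ a0 / of_real (sqrt (mX \<mu> a0)) \<noteq> 0" using posX[of a0] by simp
  then have "g u0 < 1" using strict[of "\<lambda>a. u0$a / of_real (sqrt (mX \<mu> a))" a0] N1u[of u0] u0
    unfolding g_def by simp
  define \<rho> where "\<rho> = sqrt (g u0)"
  have g0: "g u0 \<ge> 0" unfolding g_def by (rule Qf_nonneg[OF posY])
  have \<rho>2: "\<rho>\<^sup>2 = g u0" unfolding \<rho>_def using g0 by simp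
  have "\<rho> < 1" unfolding \<rho>_def using \<open>g u0 < 1\<close> g0 by simp
  moreover have "0 \<le> \<rho>" unfolding \<rho>_def using g0 by simp
  moreover have "Qf \<mu> m t f \<le> \<rho>\<^sup>2 * N1 \<mu> f" for f
  proof (cases "\<forall>a. f a = 0")
    case True
    then show ?thesis unfolding Qf_def N1_def by simp
  next
    case False
    then obtain a1 where a1: "f a1 \<noteq> 0" by blast
    have nn2: "0 \<le> mX \<mu> a * (cmod (f a))\<^sup>2" for a using posX[of a] by simp
    have "mX \<mu> a1 * (cmod (f a1))\<^sup>2 \<le> N1 \<mu> f" unfolding N1_def
      by (rule member_le_sum) (use nn2 in auto)
    moreover have "mX \<mu> a1 * (cmod (f a1))\<^sup>2 > 0" using posX[of a1] a1 by simp
    ultimately have Npos: "N1 \<mu> f > 0" by linarith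
    define s where "s = sqrt (N1 \<mu> f)"
    have s: "s > 0" "s\<^sup>2 = N1 \<mu> f" unfolding s_def using Npos by auto
    define u :: "complex^'a" where "u = (\<chi> a. of_real (sqrt (mX \<mu> a)) * f a / of_real s)"
    have fu: "(\<lambda>a. u$a / of_real (sqrt (mX \<mu> a))) = (\<lambda>a. f a / of_real s)"
    proof
      fix a
      have "mX \<mu> a > 0" by (rule posX)
      then show "u$a / of_real (sqrt (mX \<mu> a)) = f a / of_real s" unfolding u_def by simp
    qed
    have "(norm u)\<^sup>2 = N1 \<mu> (\<lambda>a. f a / of_real s)" using N1u[of u] fu by simp
    also have "\<dots> = N1 \<mu> f / s\<^sup>2" unfolding N1_def using s(1)
      by (simp add: norm_divide power_divide sum_divide_distrib)
    also have "\<dots> = 1" using s Npos by simp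
    finally have "(norm u)\<^sup>2 = 1\<^sup>2" by simp
    then have "norm u = 1" using power2_eq_imp_eq[of "norm u" 1] by simp
    then have "g u \<le> g u0" using u0max by simp
    then have "Qf \<mu> m t f / s\<^sup>2 \<le> \<rho>\<^sup>2" unfolding g_def fu Qf_scale[OF s(1)] \<rho>2 .
    then show ?thesis using s Npos by (simp add: divide_le_eq)
  qed
  ultimately show ?thesis by blast
qed



definition NN :: "('a::finite \<Rightarrow> real) \<Rightarrow> nat \<Rightarrow> ((nat \<Rightarrow> 'a) \<Rightarrow> complex) \<Rightarrow> real" where
  "NN w n F = (\<Sum>x\<in>PiE {..<n} (\<lambda>_. UNIV). (\<Prod>i<n. w (x i)) * (cmod (F x))\<^sup>2)"

lemma prod_upd2: "(\<Prod>i<Suc n. g ((x(n:=a)) i) ((y(n:=b)) i)) = (\<Prod>i<n. g (x i) (y i)) * g a b"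
  by (simp add: prod.lessThan_Suc)

lemma sum_prod_PiE_pow:
  fixes w :: "'a::finite \<Rightarrow> real"
  shows "(\<Sum>x\<in>PiE {..<n} (\<lambda>_. UNIV::'a::finite set). \<Prod>i<n. w (x i)) = (\<Sum>a\<in>UNIV. w a) ^ n"
proof (induction n)
  case 0
  then show ?case by simp
next
  case (Suc n)
  have "(\<Sum>x\<in>PiE {..<Suc n} (\<lambda>_. UNIV::'a set). \<Prod>i<Suc n. w (x i)) =
        (\<Sum>x\<in>PiE {..<n} (\<lambda>_. UNIV::'a set). \<Sum>a\<in>UNIV. (\<Prod>i<n. w (x i)) * w a)"
    unfolding sum_PiE_Suc by (simp add: prod_upd)
  also have "\<dots> = (\<Sum>x\<in>PiE {..<n} (\<lambda>_. UNIV::'a set). (\<Prod>i<n. w (x i))) * (\<Sum>a\<in>UNIV. w a)"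
    by (simp add: sum_product)
  finally show ?case using Suc by simp
qed

lemma NN_Suc:
  "NN w (Suc n) F = (\<Sum>x\<in>PiE {..<n} (\<lambda>_. UNIV). (\<Prod>i<n. w (x i)) * (\<Sum>a\<in>UNIV. w a * (cmod (F (x(n:=a))))\<^sup>2))"
  unfolding NN_def sum_PiE_Suc by (simp add: prod_upd sum_distrib_left mult_ac)

lemma NN_Suc':
  "NN w (Suc n) F = (\<Sum>a\<in>UNIV. w a * NN w n (\<lambda>x. F (x(n:=a))))"
proof -
  have "NN w (Suc n) F = (\<Sum>x\<in>PiE {..<n} (\<lambda>_. UNIV). \<Sum>a\<in>UNIV. w a * ((\<Prod>i<n. w (x i)) * (cmod (F (x(n:=a))))\<^sup>2))"
    unfolding NN_Suc by (simp add: sum_distrib_left mult_ac)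
  also have "\<dots> = (\<Sum>a\<in>UNIV. \<Sum>x\<in>PiE {..<n} (\<lambda>_. UNIV). w a * ((\<Prod>i<n. w (x i)) * (cmod (F (x(n:=a))))\<^sup>2))"
    by (rule sum.swap)
  finally show ?thesis unfolding NN_def by (simp add: sum_distrib_left)
qed

lemma NN_nonneg: "(\<And>a. w a \<ge> 0) \<Longrightarrow> NN w n F \<ge> 0"
  unfolding NN_def by (intro sum_nonneg mult_nonneg_nonneg prod_nonneg) auto



lemma corr_Suc:
  fixes \<mu> :: "'a::finite \<times> 'b::finite \<Rightarrow> real"
  shows "corr \<mu> m t (Suc n) F G = (\<Sum>b\<in>UNIV. corr \<mu> m t n
     (\<lambda>x. \<Sum>a\<in>UNIV. of_real (\<mu> (a, b)) * Tfun m t a b * F (x(n:=a))) (\<lambda>y. G (y(n:=b))))"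
proof -
  define PX where "PX = PiE {..<n} (\<lambda>_. UNIV::'a set)"
  define PY where "PY = PiE {..<n} (\<lambda>_. UNIV::'b set)"
  define c where "c = (\<lambda>x y. of_real (\<Prod>i<n. \<mu> (x i, y i)) * (\<Prod>i<n. Tfun m t (x i) (y i)))"
  define K where "K = (\<lambda>x y a b. c x y * (of_real (\<mu> (a, b)) * Tfun m t a b) * F (x(n:=a)) * G (y(n:=b)))"
  define L where "L = (\<lambda>x y. of_real (\<Prod>i<Suc n. \<mu> (x i, y i)) * F x * G y * (\<Prod>i<Suc n. Tfun m t (x i) (y i)))"
  have LK: "L (x(n:=a)) (y(n:=b)) = K x y a b" for x y a b
    unfolding L_def K_def c_def by (simp add: prod.lessThan_Suc mult_ac)
  have "corr \<mu> m t (Suc n) F G = (\<Sum>x\<in>PiE {..<Suc n} (\<lambda>_. UNIV). \<Sum>y\<in>PiE {..<Suc n} (\<lambda>_. UNIV). L x y)"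
    unfolding corr_def L_def ..
  also have "\<dots> = (\<Sum>x\<in>PX. \<Sum>a\<in>UNIV. \<Sum>y\<in>PY. \<Sum>b\<in>UNIV. L (x(n:=a)) (y(n:=b)))"
    unfolding sum_PiE_Suc PX_def PY_def ..
  also have "\<dots> = (\<Sum>x\<in>PX. \<Sum>a\<in>UNIV. \<Sum>y\<in>PY. \<Sum>b\<in>UNIV. K x y a b)"
    unfolding LK ..
  also have "\<dots> = (\<Sum>x\<in>PX. \<Sum>y\<in>PY. \<Sum>a\<in>UNIV. \<Sum>b\<in>UNIV. K x y a b)"
    by (intro sum.cong refl sum.swap)
  finally have lhs: "corr \<mu> m t (Suc n) F G = \<dots>" .
  have "(\<Sum>b\<in>UNIV. corr \<mu> m t n
     (\<lambda>x. \<Sum>a\<in>UNIV. of_real (\<mu> (a, b)) * Tfun m t a b * F (x(n:=a))) (\<lambda>y. G (y(n:=b))))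
     = (\<Sum>b\<in>UNIV. \<Sum>x\<in>PX. \<Sum>y\<in>PY. \<Sum>a\<in>UNIV. K x y a b)"
    unfolding corr_def PX_def PY_def K_def c_def
    by (intro sum.cong refl) (simp add: sum_distrib_left sum_distrib_right mult_ac)
  also have "\<dots> = (\<Sum>x\<in>PX. \<Sum>b\<in>UNIV. \<Sum>y\<in>PY. \<Sum>a\<in>UNIV. K x y a b)"
    by (rule sum.swap)
  also have "\<dots> = (\<Sum>x\<in>PX. \<Sum>y\<in>PY. \<Sum>b\<in>UNIV. \<Sum>a\<in>UNIV. K x y a b)"
    by (intro sum.cong refl sum.swap)
  also have "\<dots> = (\<Sum>x\<in>PX. \<Sum>y\<in>PY. \<Sum>a\<in>UNIV. \<Sum>b\<in>UNIV. K x y a b)"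
    by (intro sum.cong refl sum.swap)
  finally show ?thesis using lhs by simp
qed



lemma L2_sqrt: "(\<And>i. i \<in> A \<Longrightarrow> z i \<ge> 0) \<Longrightarrow> L2_set (\<lambda>i. sqrt (z i)) A = sqrt (sum z A)"
  unfolding L2_set_def by (intro arg_cong[where f=sqrt] sum.cong) auto

lemma tensor:
  fixes \<mu> :: "'a::finite \<times> 'b::finite \<Rightarrow> real"
  assumes nn: "\<And>p. \<mu> p \<ge> 0" and posY: "\<And>b. mY \<mu> b > 0" and \<rho>0: "0 \<le> \<rho>"
    and Q: "\<And>f. Qf \<mu> m t f \<le> \<rho>\<^sup>2 * N1 \<mu> f"
  shows "cmod (corr \<mu> m t n F G) \<le> \<rho>^n * sqrt (NN (mX \<mu>) n F) * sqrt (NN (mY \<mu>) n G)"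
proof (induction n arbitrary: F G)
  case 0
  have "cmod (corr \<mu> m t 0 F G) = cmod (F (\<lambda>_. undefined)) * cmod (G (\<lambda>_. undefined))"
    unfolding corr_def by (simp add: PiE_empty_domain norm_mult)
  moreover have "NN (mX \<mu>) 0 F = (cmod (F (\<lambda>_. undefined)))\<^sup>2" "NN (mY \<mu>) 0 G = (cmod (G (\<lambda>_. undefined)))\<^sup>2"
    unfolding NN_def by (simp_all add: PiE_empty_domain)
  ultimately show ?case by simp
next
  case (Suc n)
  have mXnn: "mX \<mu> a \<ge> 0" for a unfolding mX_def using nn by (simp add: sum_nonneg)
  have mYnn: "mY \<mu> b \<ge> 0" for b using posY[of b] by simp
  define H where "H = (\<lambda>b x. \<Sum>a\<in>UNIV. of_real (\<mu> (a, b)) * Tfun m t a b * F (x(n:=a)))"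
  define Gb where "Gb = (\<lambda>b y. G (y(n:=b)))"
  define A where "A = (\<lambda>b. NN (mX \<mu>) n (H b))"
  define B where "B = (\<lambda>b. NN (mY \<mu>) n (Gb b))"
  have A0: "A b \<ge> 0" for b unfolding A_def by (rule NN_nonneg[OF mXnn])
  have B0: "B b \<ge> 0" for b unfolding B_def by (rule NN_nonneg[OF mYnn])
  have "cmod (corr \<mu> m t (Suc n) F G) = cmod (\<Sum>b\<in>UNIV. corr \<mu> m t n (H b) (Gb b))"
    unfolding corr_Suc H_def Gb_def ..
  also have "\<dots> \<le> (\<Sum>b\<in>UNIV. cmod (corr \<mu> m t n (H b) (Gb b)))" by (rule norm_sum)
  also have "\<dots> \<le> (\<Sum>b\<in>UNIV. \<rho>^n * sqrt (A b) * sqrt (B b))"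
    unfolding A_def B_def by (intro sum_mono Suc.IH)
  also have "\<dots> = \<rho>^n * (\<Sum>b\<in>UNIV. \<bar>sqrt (A b / mY \<mu> b)\<bar> * \<bar>sqrt (mY \<mu> b * B b)\<bar>)"
  proof -
    have "sqrt (A b) * sqrt (B b) = \<bar>sqrt (A b / mY \<mu> b)\<bar> * \<bar>sqrt (mY \<mu> b * B b)\<bar>" for b
    proof -
      have "\<bar>sqrt (A b / mY \<mu> b)\<bar> * \<bar>sqrt (mY \<mu> b * B b)\<bar> = sqrt (A b / mY \<mu> b) * sqrt (mY \<mu> b * B b)"
        using A0[of b] B0[of b] mYnn[of b] by (simp add: abs_of_nonneg)
      also have "\<dots> = sqrt (A b / mY \<mu> b * (mY \<mu> b * B b))"
        by (rule real_sqrt_mult[symmetric])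
      also have "A b / mY \<mu> b * (mY \<mu> b * B b) = A b * B b" using posY[of b] by simp
      finally show ?thesis by (simp add: real_sqrt_mult)
    qed
    then show ?thesis by (simp add: sum_distrib_left mult.assoc)
  qed
  also have "\<dots> \<le> \<rho>^n * (L2_set (\<lambda>b. sqrt (A b / mY \<mu> b)) UNIV * L2_set (\<lambda>b. sqrt (mY \<mu> b * B b)) UNIV)"
    using \<rho>0 by (intro mult_left_mono L2_set_mult_ineq) simp
  also have "\<dots> = \<rho>^n * (sqrt (\<Sum>b\<in>UNIV. A b / mY \<mu> b) * sqrt (\<Sum>b\<in>UNIV. mY \<mu> b * B b))"
    using A0 B0 mYnn by (simp add: L2_sqrt)
  also have "(\<Sum>b\<in>UNIV. mY \<mu> b * B b) = NN (mY \<mu>) (Suc n) G"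
    unfolding NN_Suc' B_def Gb_def ..
  also have "(\<Sum>b\<in>UNIV. A b / mY \<mu> b) \<le> \<rho>\<^sup>2 * NN (mX \<mu>) (Suc n) F"
  proof -
    define PX where "PX = PiE {..<n} (\<lambda>_. UNIV::'a set)"
    define w where "w = (\<lambda>x. \<Prod>i<n. mX \<mu> (x i))"
    have w0: "w x \<ge> 0" for x unfolding w_def using mXnn by (simp add: prod_nonneg)
    have "(\<Sum>b\<in>UNIV. A b / mY \<mu> b) = (\<Sum>b\<in>UNIV. \<Sum>x\<in>PX. w x * (cmod (H b x))\<^sup>2 / mY \<mu> b)"
      unfolding A_def NN_def PX_def w_def by (simp add: sum_divide_distrib)
    also have "\<dots> = (\<Sum>x\<in>PX. \<Sum>b\<in>UNIV. w x * (cmod (H b x))\<^sup>2 / mY \<mu> b)"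
      by (rule sum.swap)
    also have "\<dots> = (\<Sum>x\<in>PX. w x * Qf \<mu> m t (\<lambda>a. F (x(n:=a))))"
      unfolding Qf_def H_def by (simp add: sum_distrib_left)
    also have "\<dots> \<le> (\<Sum>x\<in>PX. w x * (\<rho>\<^sup>2 * N1 \<mu> (\<lambda>a. F (x(n:=a)))))"
      by (intro sum_mono mult_left_mono Q w0)
    also have "\<dots> = \<rho>\<^sup>2 * NN (mX \<mu>) (Suc n) F"
      unfolding NN_Suc N1_def PX_def w_def by (simp add: sum_distrib_left mult_ac)
    finally show ?thesis .
  qed
  then have "\<rho>^n * (sqrt (\<Sum>b\<in>UNIV. A b / mY \<mu> b) * sqrt (NN (mY \<mu>) (Suc n) G)) \<le>
             \<rho>^n * (sqrt (\<rho>\<^sup>2 * NN (mX \<mu>) (Suc n) F) * sqrt (NN (mY \<mu>) (Suc n) G))"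
    using \<rho>0 NN_nonneg[of "mY \<mu>" "Suc n" G, OF mYnn] by (intro mult_left_mono mult_right_mono) auto
  also have "\<dots> = \<rho>^Suc n * sqrt (NN (mX \<mu>) (Suc n) F) * sqrt (NN (mY \<mu>) (Suc n) G)"
    using \<rho>0 by (simp add: real_sqrt_mult mult_ac)
  finally show ?case .
qed



lemma NN_le1:
  fixes w :: "'a::finite \<Rightarrow> real"
  assumes "\<And>a. w a \<ge> 0" "(\<Sum>a\<in>UNIV. w a) = 1"
    and "\<forall>x\<in>PiE {..<n} (\<lambda>_. UNIV :: 'a set). norm (F x) \<le> 1"
  shows "NN w n F \<le> 1"
proof -
  have "NN w n F \<le> (\<Sum>x\<in>PiE {..<n} (\<lambda>_. UNIV::'a set). \<Prod>i<n. w (x i))"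
    unfolding NN_def
  proof (rule sum_mono)
    fix x assume x: "x \<in> PiE {..<n} (\<lambda>_. UNIV::'a set)"
    have "(cmod (F x))\<^sup>2 \<le> 1" using assms(3) x by (simp add: power_le_one)
    moreover have "(\<Prod>i<n. w (x i)) \<ge> 0" using assms(1) by (simp add: prod_nonneg)
    ultimately show "(\<Prod>i<n. w (x i)) * (cmod (F x))\<^sup>2 \<le> (\<Prod>i<n. w (x i))"
      using mult_left_mono[of _ 1] by fastforce
  qed
  also have "\<dots> = 1" using assms(2) by (simp add: sum_prod_PiE_pow)
  finally show ?thesis .
qed

theorem lemma2p2:
  fixes \<mu> :: "'a::finite \<times> 'b::finite \<Rightarrow> real" and m :: nat and t :: "'a \<Rightarrow> 'b \<Rightarrow> int"
  assumes "m \<ge> 1"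
    and "is_distribution \<mu>"
    and "game_connected \<mu>"
    and "xor_value \<mu> m t < 1"
  shows "\<exists>c>0. \<forall>n F G.
           (\<forall>x\<in>PiE {..<n} (\<lambda>_. UNIV :: 'a set). norm (F x) \<le> 1) \<longrightarrow>
           (\<forall>y\<in>PiE {..<n} (\<lambda>_. UNIV :: 'b set). norm (G y) \<le> 1) \<longrightarrow>
           norm (corr \<mu> m t n F G) \<le> 2 powr (- c * real n)"
proof -
  have nn: "\<And>p. \<mu> p \<ge> 0" and s1: "(\<Sum>p\<in>UNIV. \<mu> p) = 1"
    using assms(2) unfolding is_distribution_def by auto
  obtain \<rho> where \<rho>: "0 \<le> \<rho>" "\<rho> < 1" "\<And>f. Qf \<mu> m t f \<le> \<rho>\<^sup>2 * N1 \<mu> f"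
    using key[OF assms] by blast
  define r where "r = max \<rho> (1/2)"
  have r: "0 < r" "r < 1" "\<rho> \<le> r" using \<rho> unfolding r_def by auto
  have mXnn: "mX \<mu> a \<ge> 0" for a unfolding mX_def using nn by (simp add: sum_nonneg)
  have mYnn: "mY \<mu> b \<ge> 0" for b unfolding mY_def using nn by (simp add: sum_nonneg)
  have posY: "mY \<mu> b > 0" for b
  proof -
    obtain a where a: "\<mu> (a, b) \<noteq> 0" using conn_nbY[OF assms(3)] by blast
    have "\<mu> (a, b) \<le> mY \<mu> b" unfolding mY_def using nn by (intro member_le_sum) auto
    then show ?thesis using a nn[of "(a,b)"] by linarith
  qed
  have Qr: "Qf \<mu> m t f \<le> r\<^sup>2 * N1 \<mu> f" for f
  proof -
    have "N1 \<mu> f \<ge> 0" unfolding N1_def using mXnn by (simp add: sum_nonneg)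
    moreover have "\<rho>\<^sup>2 \<le> r\<^sup>2" using r \<rho> by (simp add: power_mono)
    ultimately show ?thesis using \<rho>(3)[of f] mult_right_mono[of "\<rho>\<^sup>2" "r\<^sup>2" "N1 \<mu> f"] by linarith
  qed
  have sprod: "(\<Sum>a\<in>UNIV. \<Sum>b\<in>UNIV. \<mu> (a, b)) = 1"
  proof -
    have "(\<Sum>a\<in>UNIV. \<Sum>b\<in>UNIV. \<mu> (a, b)) = (\<Sum>(a,b)\<in>UNIV \<times> UNIV. \<mu> (a, b))"
      by (rule sum.cartesian_product)
    also have "\<dots> = (\<Sum>p\<in>UNIV. \<mu> p)" by (simp only: UNIV_Times_UNIV case_prod_eta)
    finally show ?thesis using s1 by simp
  qed
  have sX: "(\<Sum>a\<in>UNIV. mX \<mu> a) = 1"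
    unfolding mX_def by (rule sprod)
  have sY: "(\<Sum>b\<in>UNIV. mY \<mu> b) = 1"
    unfolding mY_def using sprod sum.swap[of "\<lambda>a b. \<mu> (a, b)" UNIV UNIV] by simp
  define c where "c = - log 2 r"
  have c: "c > 0" unfolding c_def using r by simp
  show ?thesis
  proof (intro exI[of _ c] conjI c allI impI)
    fix n :: nat and F :: "(nat \<Rightarrow> 'a) \<Rightarrow> complex" and G :: "(nat \<Rightarrow> 'b) \<Rightarrow> complex"
    assume F: "\<forall>x\<in>PiE {..<n} (\<lambda>_. UNIV :: 'a set). norm (F x) \<le> 1"
      and G: "\<forall>y\<in>PiE {..<n} (\<lambda>_. UNIV :: 'b set). norm (G y) \<le> 1"
    have "norm (corr \<mu> m t n F G) \<le> r^n * sqrt (NN (mX \<mu>) n F) * sqrt (NN (mY \<mu>) n G)"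
      using tensor[OF nn posY _ Qr] r by simp
    also have "\<dots> \<le> r^n * 1 * 1"
      using NN_le1[OF mXnn sX F] NN_le1[OF mYnn sY G] NN_nonneg[of "mX \<mu>" n F, OF mXnn]
        NN_nonneg[of "mY \<mu>" n G, OF mYnn] r
      by (intro mult_mono) auto
    also have "\<dots> = 2 powr (- c * real n)"
    proof -
      have "2 powr (- c * real n) = (2 powr (log 2 r)) powr real n"
        unfolding c_def by (simp add: powr_powr)
      also have "\<dots> = r powr real n" using r by simp
      also have "\<dots> = r ^ n" using r by (simp add: powr_realpow)
      finally show ?thesis by simp
    qed
    finally show "norm (corr \<mu> m t n F G) \<le> 2 powr (- c * real n)" .
  qed
qed

end
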